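(* Suppose that for every odd integer $n\ge 1$ and every integer $k\ge 0$ with $2^k<n<2^{k+1}$, there is an orientation of the $n$-cube in which every vertex has in-degree $n-2^k$ or $n$. Then for every positive integer $n$ and all integers $0\le a,b\le n$ for which there exist non-negative integers $s,t$ with $s+t=2^n$ and $as+bt=n2^{n-1}$, there is an orientation of the $n$-cube in which every vertex has in-degree $a$ or $b$.
   Context: The $n$-cube is the graph on binary $n$-tuples with edges between tuples differing in exactly one coordinate. An orientation assigns a direction to each edge; the in-degree of a vertex is the number of edges directed into it. *)

theory Defs
  imports Main
begin

definition cube_vertices :: "nat \<Rightarrow> bool list set" where
  "cube_vertices n = {xs. length xs = n}"

definition cube_adj :: "nat \<Rightarrow> bool list \<Rightarrow> bool list \<Rightarrow> bool" where
  "cube_adj n u v \<longleftrightarrow> u \<in> cube_vertices n \<and> v \<in> cube_vertices n \<and>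
     card {i. i < n \<and> u ! i \<noteq> v ! i} = 1"

text \<open>An orientation of the n-cube: a relation D (D u v means the edge is directed u \<rightarrow> v)
  supported on the edges, directing each edge in exactly one way.\<close>
definition is_cube_orientation :: "nat \<Rightarrow> (bool list \<Rightarrow> bool list \<Rightarrow> bool) \<Rightarrow> bool" where
  "is_cube_orientation n D \<longleftrightarrow>
     (\<forall>u v. D u v \<longrightarrow> cube_adj n u v) \<and>
     (\<forall>u v. cube_adj n u v \<longrightarrow> (D u v \<longleftrightarrow> \<not> D v u))"

definition indeg :: "(bool list \<Rightarrow> bool list \<Rightarrow> bool) \<Rightarrow> bool list \<Rightarrow> nat" where
  "indeg D v = card {u. D u v}"

end

theory Submission
  imports Defs "HOL-Computational_Algebra.Primes"
begin


definition flip :: "bool list \<Rightarrow> nat \<Rightarrow> bool list" where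
  "flip v i = v[i := \<not> v ! i]"

lemma length_flip[simp]: "length (flip v i) = length v"
  by (simp add: flip_def)

lemma nth_flip: "i < length v \<Longrightarrow> flip v i ! j = (if j = i then \<not> v ! i else v ! j)"
  by (simp add: flip_def nth_list_update)

lemma flip_inj: "i < length v \<Longrightarrow> j < length v \<Longrightarrow> flip v i = flip v j \<Longrightarrow> i = j"
  by (metis nth_flip)

lemma flip_neq: "i < length v \<Longrightarrow> flip v i \<noteq> v"
  by (metis nth_flip)

lemma adj_iff: "cube_adj n u v \<longleftrightarrow> length u = n \<and> (\<exists>i<n. v = flip u i)"
proof
  assume a: "cube_adj n u v"
  then have lu: "length u = n" and lv: "length v = n" and c: "card {i. i < n \<and> u ! i \<noteq> v ! i} = 1"
    by (auto simp: cube_adj_def cube_vertices_def)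
  from c obtain i where S: "{i. i < n \<and> u ! i \<noteq> v ! i} = {i}" by (auto simp: card_Suc_eq)
  then have i: "i < n" "u ! i \<noteq> v ! i" by auto
  have "v = flip u i"
  proof (rule nth_equalityI)
    show "length v = length (flip u i)" using lu lv by simp
    fix j assume "j < length v"
    then show "v ! j = flip u i ! j" using S i lu lv by (auto simp: nth_flip)
  qed
  with lu i show "length u = n \<and> (\<exists>i<n. v = flip u i)" by blast
next
  assume "length u = n \<and> (\<exists>i<n. v = flip u i)"
  then obtain i where lu: "length u = n" and i: "i < n" and v: "v = flip u i" by blast
  have "{j. j < n \<and> u ! j \<noteq> v ! j} = {i}" using lu i v by (auto simp: nth_flip)
  then show "cube_adj n u v" using lu v by (simp add: cube_adj_def cube_vertices_def)
qed

lemma adj_sym: "cube_adj n u v \<Longrightarrow> cube_adj n v u"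
proof -
  assume "cube_adj n u v"
  moreover have "{i. i < n \<and> v ! i \<noteq> u ! i} = {i. i < n \<and> u ! i \<noteq> v ! i}" by auto
  ultimately show ?thesis by (simp add: cube_adj_def)
qed

lemma orient_flip:
  assumes "is_cube_orientation n D" "v \<in> cube_vertices n" "i < n"
  shows "D (flip v i) v \<longleftrightarrow> \<not> D v (flip v i)"
proof -
  have "cube_adj n v (flip v i)" using assms(2,3) by (auto simp: adj_iff cube_vertices_def)
  then show ?thesis using assms(1) adj_sym unfolding is_cube_orientation_def by metis
qed

lemma in_nbrs:
  assumes "is_cube_orientation n D" "v \<in> cube_vertices n"
  shows "{u. D u v} = flip v ` {i. i < n \<and> D (flip v i) v}"
proof
  show "{u. D u v} \<subseteq> flip v ` {i. i < n \<and> D (flip v i) v}"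
  proof
    fix u assume "u \<in> {u. D u v}"
    then have "D u v" by simp
    then have "cube_adj n u v" using assms(1) by (auto simp: is_cube_orientation_def)
    then have "cube_adj n v u" by (rule adj_sym)
    then obtain i where "i<n" "u = flip v i" by (auto simp: adj_iff)
    then show "u \<in> flip v ` {i. i < n \<and> D (flip v i) v}" using \<open>D u v\<close> by auto
  qed
qed auto

lemma indeg_idx:
  assumes "is_cube_orientation n D" "v \<in> cube_vertices n"
  shows "indeg D v = card {i. i < n \<and> D (flip v i) v}"
proof -
  have "inj_on (flip v) {i. i < n \<and> D (flip v i) v}"
    using assms(2) by (auto simp: inj_on_def cube_vertices_def intro: flip_inj)
  then show ?thesis by (simp add: indeg_def in_nbrs[OF assms] card_image)
qed

definition Pc :: "nat \<Rightarrow> nat \<Rightarrow> nat \<Rightarrow> bool" where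
  "Pc n a b \<longleftrightarrow> (\<exists>D. is_cube_orientation n D \<and>
         (\<forall>v \<in> cube_vertices n. indeg D v = a \<or> indeg D v = b))"

lemma Pc_sym: "Pc n a b \<Longrightarrow> Pc n b a"
  unfolding Pc_def by blast

lemma card_compl_lessThan: "card {i. i < n \<and> \<not> P i} = n - card {i. i < n \<and> P i}"
proof -
  have "{i. i < n \<and> \<not> P i} = {..<n} - {i. i < n \<and> P i}" by auto
  then show ?thesis by (simp add: card_Diff_subset subset_eq)
qed

lemma Pc_rev:
  assumes "Pc n a b" shows "Pc n (n - a) (n - b)"
proof -
  obtain D where D: "is_cube_orientation n D" and deg: "\<forall>v \<in> cube_vertices n. indeg D v = a \<or> indeg D v = b"
    using assms unfolding Pc_def by blast
  define D' where "D' = (\<lambda>u v. D v u)"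
  have D': "is_cube_orientation n D'"
    using D adj_sym unfolding is_cube_orientation_def D'_def by metis
  have "indeg D' v = n - indeg D v" if v: "v \<in> cube_vertices n" for v
  proof -
    have "{i. i < n \<and> D' (flip v i) v} = {i. i < n \<and> \<not> D (flip v i) v}"
      using orient_flip[OF D v] by (auto simp: D'_def)
    then show ?thesis
      by (simp add: indeg_idx[OF D' v] indeg_idx[OF D v] card_compl_lessThan)
  qed
  then show ?thesis using D' deg unfolding Pc_def by metis
qed



lemma take_flip: "i < n \<Longrightarrow> take n (flip w i) = flip (take n w) i"
  by (simp add: flip_def take_update_swap)
lemma drop_flip1: "i < n \<Longrightarrow> drop n (flip w i) = drop n w"
  by (simp add: flip_def)
lemma take_flip2: "n \<le> i \<Longrightarrow> take n (flip w i) = take n w"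
  by (simp add: flip_def)
lemma drop_flip2: "n \<le> i \<Longrightarrow> i < length w \<Longrightarrow> drop n (flip w i) = flip (drop n w) (i - n)"
  by (simp add: flip_def drop_update_swap)

lemma Pc_prod:
  assumes "Pc n a b" "is_cube_orientation m D2" "\<forall>v\<in>cube_vertices m. indeg D2 v = c"
  shows "Pc (n + m) (a + c) (b + c)"
proof -
  obtain D1 where D1: "is_cube_orientation n D1" and deg: "\<forall>v \<in> cube_vertices n. indeg D1 v = a \<or> indeg D1 v = b"
    using assms unfolding Pc_def by blast
  note D2 = assms(2)
  define D where "D = (\<lambda>w w'. cube_adj (n+m) w w' \<and>
     (if take n w = take n w' then D2 (drop n w) (drop n w') else D1 (take n w) (take n w')))"
  have key: "D (flip w i) w \<longleftrightarrow> (if i < n then D1 (flip (take n w) i) (take n w)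
         else D2 (flip (drop n w) (i - n)) (drop n w))"
    and key2: "D w (flip w i) \<longleftrightarrow> (if i < n then D1 (take n w) (flip (take n w) i)
         else D2 (drop n w) (flip (drop n w) (i - n)))"
    if w: "w \<in> cube_vertices (n+m)" and i: "i < n + m" for w i
  proof -
    have lw: "length w = n + m" using w by (simp add: cube_vertices_def)
    have a1: "cube_adj (n+m) w (flip w i)" using lw i by (auto simp: adj_iff)
    have a2: "cube_adj (n+m) (flip w i) w" using adj_sym[OF a1] .
    have ne: "i < n \<Longrightarrow> flip (take n w) i \<noteq> take n w" using lw flip_neq[of i "take n w"] by simp
    show "D (flip w i) w \<longleftrightarrow> (if i < n then D1 (flip (take n w) i) (take n w)
         else D2 (flip (drop n w) (i - n)) (drop n w))"
    proof (cases "i < n")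
      case True then show ?thesis by (simp add: D_def take_flip[OF True] drop_flip1[OF True] ne[OF True] a2)
    next
      case False then show ?thesis using i lw by (simp add: D_def take_flip2 drop_flip2 a2)
    qed
    show "D w (flip w i) \<longleftrightarrow> (if i < n then D1 (take n w) (flip (take n w) i)
         else D2 (drop n w) (flip (drop n w) (i - n)))"
    proof (cases "i < n")
      case True then show ?thesis using ne[OF True] by (simp add: D_def take_flip[OF True] drop_flip1[OF True] a1)
    next
      case False then show ?thesis using i lw by (simp add: D_def take_flip2 drop_flip2 a1)
    qed
  qed
  have orient: "is_cube_orientation (n+m) D"
    unfolding is_cube_orientation_def
  proof (intro conjI allI impI)
    fix u v assume "D u v" then show "cube_adj (n+m) u v" by (simp add: D_def)
  next
    fix u v assume a: "cube_adj (n+m) u v"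
    then obtain i where lu: "length u = n + m" and i: "i < n + m" and v: "v = flip u i" by (auto simp: adj_iff)
    have u: "u \<in> cube_vertices (n+m)" using lu by (simp add: cube_vertices_def)
    have tu: "take n u \<in> cube_vertices n" using lu by (simp add: cube_vertices_def)
    have du: "drop n u \<in> cube_vertices m" using lu by (simp add: cube_vertices_def)
    show "D u v \<longleftrightarrow> \<not> D v u"
      unfolding v key[OF u i] key2[OF u i]
      using orient_flip[OF D1 tu, of i] orient_flip[OF D2 du, of "i - n"] i by auto
  qed
  have "indeg D w = indeg D1 (take n w) + indeg D2 (drop n w)" if w: "w \<in> cube_vertices (n+m)" for w
  proof -
    have lw: "length w = n + m" using w by (simp add: cube_vertices_def)
    have tw: "take n w \<in> cube_vertices n" using lw by (simp add: cube_vertices_def)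
    have dw: "drop n w \<in> cube_vertices m" using lw by (simp add: cube_vertices_def)
    let ?A = "{i. i < n \<and> D1 (flip (take n w) i) (take n w)}"
    let ?B = "{j. j < m \<and> D2 (flip (drop n w) j) (drop n w)}"
    have S: "{i. i < n + m \<and> D (flip w i) w} = ?A \<union> (\<lambda>j. j + n) ` ?B"
    proof (intro equalityI subsetI)
      fix i assume "i \<in> {i. i < n + m \<and> D (flip w i) w}"
      then have i: "i < n + m" and d: "D (flip w i) w" by auto
      show "i \<in> ?A \<union> (\<lambda>j. j + n) ` ?B"
      proof (cases "i < n")
        case True then show ?thesis using d key[OF w i] by auto
      next
        case False
        then have "i - n \<in> ?B" using d key[OF w i] i by auto
        moreover have "i = (i - n) + n" using False by simp
        ultimately show ?thesis by blast
      qed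
    next
      fix i assume "i \<in> ?A \<union> (\<lambda>j. j + n) ` ?B"
      then show "i \<in> {i. i < n + m \<and> D (flip w i) w}"
      proof
        assume "i \<in> ?A" then show ?thesis using key[OF w, of i] by auto
      next
        assume "i \<in> (\<lambda>j. j + n) ` ?B"
        then obtain j where j: "j \<in> ?B" and ij: "i = j + n" by blast
        then show ?thesis using key[OF w, of i] by auto
      qed
    qed
    have "card {i. i < n + m \<and> D (flip w i) w} = card ?A + card ((\<lambda>j. j + n) ` ?B)"
      unfolding S by (rule card_Un_disjoint) auto
    also have "card ((\<lambda>j. j + n) ` ?B) = card ?B" by (rule card_image) (auto simp: inj_on_def)
    finally show ?thesis
      using indeg_idx[OF orient w] indeg_idx[OF D1 tw] indeg_idx[OF D2 dw] by simp
  qed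
  moreover have "take n w \<in> cube_vertices n" "drop n w \<in> cube_vertices m"
    if "w \<in> cube_vertices (n+m)" for w using that by (auto simp: cube_vertices_def)
  ultimately have "\<forall>w\<in>cube_vertices (n+m). indeg D w = a + c \<or> indeg D w = b + c"
    using deg assms(3) by fastforce
  then show ?thesis unfolding Pc_def using orient by blast
qed



lemma len2: "length u = 2 \<Longrightarrow> \<exists>x y. u = [x, y]"
  by (metis (no_types) One_nat_def Suc_1 length_0_conv length_Suc_conv)

definition C2 :: "bool list \<Rightarrow> bool list \<Rightarrow> bool" where
  "C2 u v \<longleftrightarrow> (u = [False,False] \<and> v = [True,False]) \<or> (u = [True,False] \<and> v = [True,True])
     \<or> (u = [True,True] \<and> v = [False,True]) \<or> (u = [False,True] \<and> v = [False,False])"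

lemma less2: "(i::nat) < 2 \<longleftrightarrow> i = 0 \<or> i = 1" by auto

lemma C2_orient: "is_cube_orientation 2 C2"
  unfolding is_cube_orientation_def
proof (intro conjI allI impI)
  fix u v assume "C2 u v"
  then show "cube_adj 2 u v"
    unfolding adj_iff C2_def less2 by (auto simp: flip_def)
next
  fix u v assume "cube_adj 2 u v"
  then obtain i where l: "length u = 2" and i: "i < 2" and v: "v = flip u i" by (auto simp: adj_iff)
  from l obtain x y where "u = [x,y]" using len2[of u] by blast
  moreover have "i = 0 \<or> i = 1" using i by auto
  ultimately have "u = [x,y]" "i = 0 \<or> i = 1" "v = flip u i" using v by auto
  then show "C2 u v \<longleftrightarrow> \<not> C2 v u"
    by (cases x; cases y; auto simp: C2_def flip_def)
qed

lemma C2_deg: "v \<in> cube_vertices 2 \<Longrightarrow> indeg C2 v = 1"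
proof -
  assume "v \<in> cube_vertices 2"
  then have "length v = 2" by (simp add: cube_vertices_def)
  then obtain x y where v: "v = [x,y]" using len2[of v] by blast
  show ?thesis unfolding v indeg_def
    by (cases x; cases y; simp add: C2_def)
qed

lemma Pc_step: "Pc n a b \<Longrightarrow> Pc (n + 2) (a + 1) (b + 1)"
  using Pc_prod[OF _ C2_orient] C2_deg by blast

lemma Pc_steps: "Pc n a b \<Longrightarrow> Pc (n + 2 * c) (a + c) (b + c)"
proof (induction c)
  case 0 then show ?case by simp
next
  case (Suc c)
  then have "Pc (n + 2 * c + 2) (a + c + 1) (b + c + 1)" using Pc_step by blast
  then show ?case by (simp add: algebra_simps)
qed

lemma Pc0: "Pc 0 0 0"
proof -
  have "is_cube_orientation 0 (\<lambda>u v. False)" by (simp add: is_cube_orientation_def adj_iff)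
  moreover have "indeg (\<lambda>u v. False) v = 0" for v by (simp add: indeg_def)
  ultimately show ?thesis unfolding Pc_def by blast
qed

lemma Pc1: "Pc 1 0 1"
proof -
  define D where "D = (\<lambda>u v. u = [False] \<and> v = [True])"
  have o: "is_cube_orientation 1 D"
    unfolding is_cube_orientation_def
  proof (intro conjI allI impI)
    fix u v assume "D u v" then show "cube_adj 1 u v"
      by (auto simp: D_def adj_iff flip_def)
  next
    fix u v assume "cube_adj 1 u v"
    then obtain x where "u = [x]" "v = flip u 0" by (auto simp: adj_iff length_Suc_conv)
    then show "D u v \<longleftrightarrow> \<not> D v u" by (cases x) (auto simp: D_def flip_def)
  qed
  have "indeg D v \<le> 1" for v
  proof -
    have "{u. D u v} \<subseteq> {[False]}" by (auto simp: D_def)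
    then show ?thesis unfolding indeg_def by (metis card_mono finite.emptyI finite.insertI card_1_singleton_iff
        is_singletonI is_singleton_altdef)
  qed
  then show ?thesis using o unfolding Pc_def by (metis le_Suc_eq le_zero_eq One_nat_def)
qed

lemma Pc22: "Pc 2 0 1"
  using C2_orient C2_deg unfolding Pc_def by blast



definition par :: "nat \<Rightarrow> bool list \<Rightarrow> bool list" where
  "par n x = map (\<lambda>i. odd (card {j. j < length x \<and> j mod n = i \<and> x ! j})) [0..<n]"

lemma length_par[simp]: "length (par n x) = n" by (simp add: par_def)

lemma par_flip:
  assumes n: "0 < n" and j: "j < length x"
  shows "par n (flip x j) = flip (par n x) (j mod n)"
proof (rule nth_equalityI)
  show "length (par n (flip x j)) = length (flip (par n x) (j mod n))" by simp
  fix i assume "i < length (par n (flip x j))"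
  then have i: "i < n" by simp
  let ?S = "{k. k < length x \<and> k mod n = i \<and> x ! k}"
  let ?S' = "{k. k < length x \<and> k mod n = i \<and> flip x j ! k}"
  have fin: "finite ?S" by (rule finite_subset[of _ "{..<length x}"]) auto
  have jm: "j mod n < n" using n by simp
  have rhs: "flip (par n x) (j mod n) ! i = (if i = j mod n then \<not> odd (card ?S) else odd (card ?S))"
    using i jm by (simp add: nth_flip par_def)
  have lhs: "par n (flip x j) ! i = odd (card ?S')" using i by (simp add: par_def)
  show "par n (flip x j) ! i = flip (par n x) (j mod n) ! i"
  proof (cases "i = j mod n")
    case False
    then have "?S' = ?S" using j by (auto simp: nth_flip)
    then show ?thesis using lhs rhs False by simp
  next
    case True
    show ?thesis
    proof (cases "x ! j")
      case xj: True
      then have "?S' = ?S - {j}" using j True by (auto simp: nth_flip)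
      moreover have "j \<in> ?S" using j True xj by simp
      ultimately have c1: "card ?S' = card ?S - 1" and c2: "card ?S > 0" using fin
        by (simp add: card_Diff_singleton, auto simp: card_gt_0_iff)
      then have "card ?S = Suc (card ?S')" by simp
      then show ?thesis using lhs rhs True by simp
    next
      case xj: False
      then have "?S' = insert j ?S" using j True by (auto simp: nth_flip)
      moreover have "j \<notin> ?S" using xj by simp
      ultimately have "card ?S' = card ?S + 1" using fin by simp
      then show ?thesis using lhs rhs True by simp
    qed
  qed
qed

lemma count_mod:
  assumes "I \<subseteq> {..<n}"
  shows "card {j. j < L * n \<and> j mod n \<in> I} = L * card I"
proof (induction L)
  case 0 then show ?case by simp
next
  case (Suc L)
  have fin: "finite I" using assms finite_subset by blast
  have "{j. j < Suc L * n \<and> j mod n \<in> I} = {j. j < L * n \<and> j mod n \<in> I} \<union> (\<lambda>i. L * n + i) ` I"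
  proof (intro equalityI subsetI)
    fix j assume "j \<in> {j. j < Suc L * n \<and> j mod n \<in> I}"
    then have j: "j < L * n + n" "j mod n \<in> I" by auto
    show "j \<in> {j. j < L * n \<and> j mod n \<in> I} \<union> (\<lambda>i. L * n + i) ` I"
    proof (cases "j < L * n")
      case True then show ?thesis using j by auto
    next
      case False
      then have "j = L * n + (j - L * n)" by simp
      moreover have "(j - L * n) mod n = j mod n"
        using False by (metis \<open>j = L * n + (j - L * n)\<close> mod_mult_self3)
      moreover have "j - L * n < n" using j False by simp
      then have "(j - L * n) mod n = j - L * n" by simp
      ultimately show ?thesis using j by (metis UnI2 image_eqI)
    qed
  next
    fix j assume "j \<in> {j. j < L * n \<and> j mod n \<in> I} \<union> (\<lambda>i. L * n + i) ` I"
    then show "j \<in> {j. j < Suc L * n \<and> j mod n \<in> I}"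
    proof
      assume "j \<in> {j. j < L * n \<and> j mod n \<in> I}" then show ?thesis by auto
    next
      assume "j \<in> (\<lambda>i. L * n + i) ` I"
      then obtain i where "i \<in> I" "j = L * n + i" by blast
      moreover have "i < n" using \<open>i \<in> I\<close> assms by auto
      ultimately show ?thesis by (simp add: mod_mult_self3)
    qed
  qed
  moreover have "card ((\<lambda>i. L * n + i) ` I) = card I" by (rule card_image) (auto simp: inj_on_def)
  moreover have "{j. j < L * n \<and> j mod n \<in> I} \<inter> (\<lambda>i. L * n + i) ` I = {}" by auto
  ultimately have "card {j. j < Suc L * n \<and> j mod n \<in> I} = L * card I + card I"
    using Suc fin by (simp add: card_Un_disjoint)
  then show ?case by simp
qed

lemma Pc_lift:
  assumes n: "0 < n" and P: "Pc n a b"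
  shows "Pc (L * n) (L * a) (L * b)"
proof -
  obtain D where D: "is_cube_orientation n D" and deg: "\<forall>v \<in> cube_vertices n. indeg D v = a \<or> indeg D v = b"
    using P unfolding Pc_def by blast
  define D' where "D' = (\<lambda>x y. cube_adj (L*n) x y \<and> D (par n x) (par n y))"
  have pv: "par n x \<in> cube_vertices n" for x by (simp add: cube_vertices_def)
  have key: "D' (flip x j) x \<longleftrightarrow> D (flip (par n x) (j mod n)) (par n x)"
    and key2: "D' x (flip x j) \<longleftrightarrow> D (par n x) (flip (par n x) (j mod n))"
    if x: "length x = L * n" and j: "j < L * n" for x j
  proof -
    have a1: "cube_adj (L*n) x (flip x j)" using x j by (auto simp: adj_iff)
    have a2: "cube_adj (L*n) (flip x j) x" using adj_sym[OF a1] .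
    show "D' (flip x j) x \<longleftrightarrow> D (flip (par n x) (j mod n)) (par n x)"
      using a2 par_flip[OF n, of j x] x j by (simp add: D'_def)
    show "D' x (flip x j) \<longleftrightarrow> D (par n x) (flip (par n x) (j mod n))"
      using a1 par_flip[OF n, of j x] x j by (simp add: D'_def)
  qed
  have orient: "is_cube_orientation (L*n) D'"
    unfolding is_cube_orientation_def
  proof (intro conjI allI impI)
    fix u v assume "D' u v" then show "cube_adj (L*n) u v" by (simp add: D'_def)
  next
    fix u v assume "cube_adj (L*n) u v"
    then obtain j where lu: "length u = L * n" and j: "j < L * n" and v: "v = flip u j" by (auto simp: adj_iff)
    show "D' u v \<longleftrightarrow> \<not> D' v u"
      unfolding v key[OF lu j] key2[OF lu j] using orient_flip[OF D pv, of "j mod n" u] n by simp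
  qed
  have "indeg D' x = L * indeg D (par n x)" if x: "x \<in> cube_vertices (L*n)" for x
  proof -
    have lx: "length x = L * n" using x by (simp add: cube_vertices_def)
    let ?I = "{i. i < n \<and> D (flip (par n x) i) (par n x)}"
    have "{j. j < L * n \<and> D' (flip x j) x} = {j. j < L * n \<and> j mod n \<in> ?I}"
      using key[OF lx] n by auto
    then show ?thesis
      using indeg_idx[OF orient x] indeg_idx[OF D pv] count_mod[of ?I n L] by auto
  qed
  then show ?thesis using orient deg pv unfolding Pc_def by metis
qed



lemma numth:
  fixes m d t :: nat
  assumes d: "0 < d" and dm: "d \<le> m" and md: "m \<le> 2 * d" and eq: "d * t = 2 ^ N * m"
  shows "\<exists>g m' j. m = g * m' \<and> d = g * 2 ^ j \<and> 0 < g \<and>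
     ((j = 0 \<and> (m' = 1 \<or> m' = 2)) \<or> (odd m' \<and> 2 ^ j < m' \<and> m' < 2 ^ (j + 1)))"
proof -
  define g where "g = gcd m d"
  define m' where "m' = m div g"
  define d' where "d' = d div g"
  have g0: "0 < g" using d by (simp add: g_def)
  have mg: "m = g * m'" by (simp add: m'_def g_def)
  have dg: "d = g * d'" by (simp add: d'_def g_def)
  have cop: "coprime m' d'" unfolding m'_def d'_def g_def using d by (intro div_gcd_coprime) simp
  have "g * (d' * t) = g * (2 ^ N * m')" using eq mg dg by (simp add: ac_simps)
  then have "d' * t = 2 ^ N * m'" using g0 by simp
  then have "d' dvd 2 ^ N * m'" by (metis dvd_triv_left)
  then have "d' dvd 2 ^ N" using cop by (simp add: coprime_dvd_mult_left_iff coprime_commute)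
  then obtain j where dj: "d' = 2 ^ j" using divides_primepow_nat[of 2 d' N] by auto
  have l1: "2 ^ j \<le> m'" using dm mg dg dj g0 by simp
  have l2: "m' \<le> 2 ^ (j + 1)" using md mg dg dj g0 by simp
  show ?thesis
  proof (cases "j = 0")
    case True
    then have "m' = 1 \<or> m' = 2" using l1 l2 by auto
    then show ?thesis using True mg dg dj g0 by fastforce
  next
    case False
    have om: "odd m'"
    proof
      assume "even m'"
      moreover have "even d'" using dj False by simp
      ultimately show False using cop by (metis coprime_common_divisor dvd_refl odd_one)
    qed
    have "m' \<noteq> 2 ^ j" using om False by auto
    moreover have "m' \<noteq> 2 ^ (j + 1)" using om by auto
    ultimately show ?thesis using l1 l2 om mg dg dj g0 by (metis le_neq_implies_less)
  qed
qed



lemma base: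
  assumes H: "\<forall>(n::nat) (k::nat). odd n \<and> n \<ge> 1 \<and> 2 ^ k < n \<and> n < 2 ^ (k + 1) \<longrightarrow>
      (\<exists>D. is_cube_orientation n D \<and>
         (\<forall>v \<in> cube_vertices n. indeg D v = n - 2 ^ k \<or> indeg D v = n))"
  and g: "0 < g" and mg: "m = g * m'" and dg: "d = g * 2 ^ j"
  and c: "(j = 0 \<and> (m' = 1 \<or> m' = 2)) \<or> (odd m' \<and> 2 ^ j < m' \<and> m' < 2 ^ (j + 1))"
  shows "Pc m 0 d"
proof -
  consider "j = 0" "m' = 1" | "j = 0" "m' = 2" | "odd m'" "2 ^ j < m'" "m' < 2 ^ (j + 1)" using c by blast
  then show ?thesis
  proof cases
    case 1
    then show ?thesis using Pc_lift[OF _ Pc1, of g] mg dg by simp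
  next
    case 2
    then show ?thesis using Pc_lift[OF _ Pc22, of g] mg dg by simp
  next
    case 3
    then have "odd m' \<and> m' \<ge> 1 \<and> 2 ^ j < m' \<and> m' < 2 ^ (j + 1)" by (simp add: odd_pos Suc_leI)
    then have "\<exists>D. is_cube_orientation m' D \<and>
         (\<forall>v \<in> cube_vertices m'. indeg D v = m' - 2 ^ j \<or> indeg D v = m')" using H by blast
    then have "Pc m' (m' - 2 ^ j) m'" unfolding Pc_def .
    then have "Pc m' (m' - (m' - 2 ^ j)) (m' - m')" by (rule Pc_rev)
    moreover have "m' - (m' - 2 ^ j) = 2 ^ j" using 3 by simp
    ultimately have "Pc m' (2 ^ j) 0" by simp
    then have "Pc (g * m') (g * 2 ^ j) (g * 0)" using 3 by (intro Pc_lift) (auto simp: odd_pos)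
    then show ?thesis using mg dg by (simp add: Pc_sym)
  qed
qed

lemma M:
  assumes H: "\<forall>(n::nat) (k::nat). odd n \<and> n \<ge> 1 \<and> 2 ^ k < n \<and> n < 2 ^ (k + 1) \<longrightarrow>
      (\<exists>D. is_cube_orientation n D \<and>
         (\<forall>v \<in> cube_vertices n. indeg D v = n - 2 ^ k \<or> indeg D v = n))"
  and ab: "a \<le> b" and abn: "a + b \<le> n" and nb: "n \<le> 2 * b" and eq: "(b - a) * t = 2 ^ N * (n - 2 * a)"
  shows "Pc n a b"
proof (cases "a = b")
  case True
  then have "n = 2 * a" using abn nb by simp
  then show ?thesis using Pc_steps[OF Pc0, of a] True by simp
next
  case False
  define d where "d = b - a"
  define m where "m = n - 2 * a"
  have d0: "0 < d" using False ab by (simp add: d_def)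
  have dm: "d \<le> m" using abn by (simp add: d_def m_def)
  have md: "m \<le> 2 * d" using nb ab by (simp add: d_def m_def)
  have "d * t = 2 ^ N * m" using eq by (simp add: d_def m_def)
  then obtain g m' j where "m = g * m'" "d = g * 2 ^ j" "0 < g"
     "(j = 0 \<and> (m' = 1 \<or> m' = 2)) \<or> (odd m' \<and> 2 ^ j < m' \<and> m' < 2 ^ (j + 1))"
    using numth[OF d0 dm md] by blast
  then have "Pc m 0 d" using base[OF H] by blast
  then have "Pc (m + 2 * a) (0 + a) (d + a)" by (rule Pc_steps)
  moreover have "m + 2 * a = n" "d + a = b" using abn ab by (auto simp: m_def d_def)
  ultimately show ?thesis by simp
qed

lemma T:
  assumes H: "\<forall>(n::nat) (k::nat). odd n \<and> n \<ge> 1 \<and> 2 ^ k < n \<and> n < 2 ^ (k + 1) \<longrightarrow>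
      (\<exists>D. is_cube_orientation n D \<and>
         (\<forall>v \<in> cube_vertices n. indeg D v = n - 2 ^ k \<or> indeg D v = n))"
  and n: "0 < n" and ab: "a \<le> b" and bn: "b \<le> n"
  and st: "s + t = 2 ^ n" and eq: "a * s + b * t = n * 2 ^ (n - 1)"
  shows "Pc n a b"
proof -
  define h :: nat where "h = 2 ^ (n - 1)"
  have h0: "0 < h" by (simp add: h_def)
  have st2: "s + t = 2 * h" using st n unfolding h_def by (metis power_eq_if mult.commute not_gr_zero)
  have eqh: "a * s + b * t = n * h" using eq by (simp add: h_def)
  have "a * s \<le> b * s" using ab by simp
  then have "n * h \<le> b * s + b * t" using eqh by linarith
  then have "n * h \<le> b * (s + t)" by (simp add: algebra_simps)
  then have "n * h \<le> (2 * b) * h" using st2 by (simp add: algebra_simps)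
  then have nb: "n \<le> 2 * b" using h0 by simp
  have "a * t \<le> b * t" using ab by simp
  then have "a * s + a * t \<le> n * h" using eqh by linarith
  then have "a * (s + t) \<le> n * h" by (simp add: algebra_simps)
  then have "(2 * a) * h \<le> n * h" using st2 by (simp add: algebra_simps)
  then have an: "2 * a \<le> n" using h0 by simp
  have bt: "b * t = (b - a) * t + a * t" using ab by (simp add: diff_mult_distrib)
  have bs: "b * s = (b - a) * s + a * s" using ab by (simp add: diff_mult_distrib)
  have as2: "a * s + a * t = (2 * a) * h"
  proof -
    have "a * (s + t) = a * (2 * h)" by (simp only: st2)
    then show ?thesis by (simp add: algebra_simps)
  qed
  have bs2: "b * s + b * t = (2 * b) * h"
  proof -
    have "b * (s + t) = b * (2 * h)" by (simp only: st2)
    then show ?thesis by (simp add: algebra_simps)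
  qed
  have e1: "(2 * a) * h + (b - a) * t = n * h" using as2 bt eqh by linarith
  have e2: "(b - a) * s + n * h = (2 * b) * h" using bs2 bs eqh by linarith
  show ?thesis
  proof (cases "a + b \<le> n")
    case True
    have "(b - a) * t = n * h - (2 * a) * h" using e1 by linarith
    then have "(b - a) * t = h * (n - 2 * a)" by (metis diff_mult_distrib mult.commute)
    then show ?thesis using M[OF H ab True nb, of t "n - 1"] by (simp add: h_def)
  next
    case False
    have "(b - a) * s = (2 * b) * h - n * h" using e2 by linarith
    then have "(b - a) * s = h * (2 * b - n)" by (metis diff_mult_distrib mult.commute)
    moreover have "(n - a) - (n - b) = b - a" "n - 2 * (n - b) = 2 * b - n" using ab bn by auto
    ultimately have "Pc n (n - b) (n - a)"
      using M[OF H, of "n - b" "n - a" n s "n - 1"] ab bn False an by (simp add: h_def)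
    then have "Pc n (n - (n - b)) (n - (n - a))" by (rule Pc_rev)
    then show ?thesis using ab bn by (simp add: Pc_sym)
  qed
qed

theorem corollary3:
  assumes "\<forall>(n::nat) (k::nat). odd n \<and> n \<ge> 1 \<and> 2 ^ k < n \<and> n < 2 ^ (k + 1) \<longrightarrow>
      (\<exists>D. is_cube_orientation n D \<and>
         (\<forall>v \<in> cube_vertices n. indeg D v = n - 2 ^ k \<or> indeg D v = n))"
  shows "\<forall>(n::nat) (a::nat) (b::nat). n > 0 \<and> a \<le> n \<and> b \<le> n \<and>
      (\<exists>s t :: nat. s + t = 2 ^ n \<and> a * s + b * t = n * 2 ^ (n - 1)) \<longrightarrow>
      (\<exists>D. is_cube_orientation n D \<and>
         (\<forall>v \<in> cube_vertices n. indeg D v = a \<or> indeg D v = b))"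
proof (intro allI impI)
  fix n a b :: nat
  assume A: "n > 0 \<and> a \<le> n \<and> b \<le> n \<and>
      (\<exists>s t :: nat. s + t = 2 ^ n \<and> a * s + b * t = n * 2 ^ (n - 1))"
  then obtain s t where st: "s + t = 2 ^ n" "a * s + b * t = n * 2 ^ (n - 1)" by blast
  have "Pc n a b"
  proof (cases "a \<le> b")
    case True then show ?thesis using T[OF assms _ True _ st] A by blast
  next
    case False
    have "t + s = 2 ^ n" "b * t + a * s = n * 2 ^ (n - 1)" using st by simp_all
    then have "Pc n b a" using T[OF assms, of n b a t s] A False by simp
    then show ?thesis by (rule Pc_sym)
  qed
  then show "\<exists>D. is_cube_orientation n D \<and>
         (\<forall>v \<in> cube_vertices n. indeg D v = a \<or> indeg D v = b)" by (simp add: Pc_def)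
qed


end
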